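(* Let $\mathbf{C}$ be a positively graded $\Bbbk$-linear category and let $(\mathcal{X}^\bullet,d^\bullet)$ be a minimal complex of graded $\mathbf{C}$-modules each of whose components is a direct sum of modules of the form $\mathsf{P}(\lambda)\langle k\rangle$, $\lambda\in\operatorname{Ob}(\mathbf{C})$, $k\in\mathbb{Z}$. For $i,j\in\mathbb{Z}$ write $\mathcal{X}^j=\mathcal{X}\{>i\}^j\oplus\mathcal{X}\{=i\}^j\oplus\mathcal{X}\{<i\}^j$, where $\mathcal{X}\{>i\}^j$ (resp. $\mathcal{X}\{=i\}^j$, $\mathcal{X}\{<i\}^j$) is the sum of the indecomposable summands isomorphic to some $\mathsf{P}(\lambda)\langle k\rangle$ with $k>i$ (resp. $k=i$, $k<i$). Then for all $i,j\in\mathbb{Z}$ we have $d^j(\mathcal{X}\{>i\}^j)\subseteq\mathcal{X}\{>i+1\}^{j+1}$.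
   Context: $\Bbbk$ is a field. $\mathbf{C}$ positively graded means: morphism spaces are $\mathbb{Z}$-graded with composition adding degrees, $\mathbf{C}_i(\lambda,\mu)=0$ for $i<0$, $\mathbf{C}_0(\lambda,\mu)=0$ for $\lambda\ne\mu$ and $\mathbf{C}_0(\lambda,\lambda)=\Bbbk e_\lambda$, all $\mathbf{C}_i(\lambda,\mu)$ finite-dimensional, and for each $\lambda,i$ only finitely many $\mu$ with $\mathbf{C}_i(\lambda,\mu)\ne0$ or $\mathbf{C}_i(\mu,\lambda)\ne0$. Graded $\mathbf{C}$-modules are $\Bbbk$-linear functors from $\mathbf{C}$ to graded vector spaces sending degree-$k$ morphisms to degree-$k$ maps; $\mathsf{M}\langle i\rangle(\lambda)_j=\mathsf{M}(\lambda)_{i+j}$; $\mathsf{P}(\lambda)=\mathbf{C}(\lambda,-)$. A complex is minimal if it has no direct summand of the form $\cdots\to0\to\mathsf{M}\xrightarrow{\sim}\mathsf{M}\to0\to\cdots$. *)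

theory Defs
  imports Main "HOL.Vector_Spaces"
begin

text \<open>
A graded k-linear category C with object type 'o is given by its
homogeneous morphism spaces  Cm la mu i = C_i(la,mu)  (subspaces of an ambient
k-vector space 'm with scalar multiplication sC), a composition
cmp la mu nu g f = g \<circ> f  (f : la \<rightarrow> mu, g : mu \<rightarrow> nu) and identities e la.
The full morphism space is the direct sum of the homogeneous pieces.
A graded C-module is given by its homogeneous pieces M la n = M(la)_n (subspaces
of an ambient k-vector space 'v with scalar multiplication sV) and the action
act la mu f : M(la)_n \<rightarrow> M(mu)_{n+i} of homogeneous f in C_i(la,mu).
\<close>

definition lin_on :: "('k::field \<Rightarrow> 'a::ab_group_add \<Rightarrow> 'a) \<Rightarrow> ('k \<Rightarrow> 'b::ab_group_add \<Rightarrow> 'b)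
    \<Rightarrow> 'a set \<Rightarrow> 'b set \<Rightarrow> ('a \<Rightarrow> 'b) \<Rightarrow> bool" where
  "lin_on s1 s2 A B f \<longleftrightarrow>
     (\<forall>x\<in>A. f x \<in> B) \<and> (\<forall>x\<in>A. \<forall>y\<in>A. f (x + y) = f x + f y) \<and>
     (\<forall>c. \<forall>x\<in>A. f (s1 c x) = s2 c (f x))"

definition fin_dim_sub :: "('k::field \<Rightarrow> 'a::ab_group_add \<Rightarrow> 'a) \<Rightarrow> 'a set \<Rightarrow> bool" where
  "fin_dim_sub s A \<longleftrightarrow> (\<exists>F. finite F \<and> F \<subseteq> A \<and> module.span s F = A)"

definition pos_graded_cat ::
  "('k::field \<Rightarrow> 'm::ab_group_add \<Rightarrow> 'm) \<Rightarrow> ('o \<Rightarrow> 'o \<Rightarrow> int \<Rightarrow> 'm set)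
   \<Rightarrow> ('o \<Rightarrow> 'o \<Rightarrow> 'o \<Rightarrow> 'm \<Rightarrow> 'm \<Rightarrow> 'm) \<Rightarrow> ('o \<Rightarrow> 'm) \<Rightarrow> bool" where
  "pos_graded_cat sC Cm cmp e \<longleftrightarrow>
     vector_space sC \<and>
     (\<forall>la mu i. module.subspace sC (Cm la mu i)) \<and>
     (\<forall>la mu nu i i' f g. f \<in> Cm la mu i \<longrightarrow> g \<in> Cm mu nu i' \<longrightarrow> cmp la mu nu g f \<in> Cm la nu (i + i')) \<and>
     (\<forall>la mu nu i i' g. g \<in> Cm mu nu i' \<longrightarrow> lin_on sC sC (Cm la mu i) (Cm la nu (i + i')) (\<lambda>f. cmp la mu nu g f)) \<and>
     (\<forall>la mu nu i i' f. f \<in> Cm la mu i \<longrightarrow> lin_on sC sC (Cm mu nu i') (Cm la nu (i + i')) (\<lambda>g. cmp la mu nu g f)) \<and>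
     (\<forall>la mu nu rh i i' i'' f g h. f \<in> Cm la mu i \<longrightarrow> g \<in> Cm mu nu i' \<longrightarrow> h \<in> Cm nu rh i'' \<longrightarrow>
        cmp la nu rh h (cmp la mu nu g f) = cmp la mu rh (cmp mu nu rh h g) f) \<and>
     (\<forall>la. e la \<in> Cm la la 0) \<and>
     (\<forall>la mu i f. f \<in> Cm la mu i \<longrightarrow> cmp la la mu f (e la) = f \<and> cmp la mu mu (e mu) f = f) \<and>
     (\<forall>la mu i. i < 0 \<longrightarrow> Cm la mu i = {0}) \<and>
     (\<forall>la mu. la \<noteq> mu \<longrightarrow> Cm la mu 0 = {0}) \<and>
     (\<forall>la. Cm la la 0 = range (\<lambda>c. sC c (e la))) \<and>
     (\<forall>la mu i. fin_dim_sub sC (Cm la mu i)) \<and>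
     (\<forall>la i. finite {mu. Cm la mu i \<noteq> {0}} \<and> finite {mu. Cm mu la i \<noteq> {0}})"

definition graded_module ::
  "('k::field \<Rightarrow> 'm::ab_group_add \<Rightarrow> 'm) \<Rightarrow> ('o \<Rightarrow> 'o \<Rightarrow> int \<Rightarrow> 'm set)
   \<Rightarrow> ('o \<Rightarrow> 'o \<Rightarrow> 'o \<Rightarrow> 'm \<Rightarrow> 'm \<Rightarrow> 'm) \<Rightarrow> ('o \<Rightarrow> 'm)
   \<Rightarrow> ('k \<Rightarrow> 'v::ab_group_add \<Rightarrow> 'v) \<Rightarrow> ('o \<Rightarrow> int \<Rightarrow> 'v set) \<Rightarrow> ('o \<Rightarrow> 'o \<Rightarrow> 'm \<Rightarrow> 'v \<Rightarrow> 'v) \<Rightarrow> bool" where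
  "graded_module sC Cm cmp e sV M act \<longleftrightarrow>
     (\<forall>la n. module.subspace sV (M la n)) \<and>
     (\<forall>la mu i n f. f \<in> Cm la mu i \<longrightarrow> lin_on sV sV (M la n) (M mu (n + i)) (act la mu f)) \<and>
     (\<forall>la mu i n v. v \<in> M la n \<longrightarrow> lin_on sC sV (Cm la mu i) (M mu (n + i)) (\<lambda>f. act la mu f v)) \<and>
     (\<forall>la n v. v \<in> M la n \<longrightarrow> act la la (e la) v = v) \<and>
     (\<forall>la mu nu i i' n f g v. f \<in> Cm la mu i \<longrightarrow> g \<in> Cm mu nu i' \<longrightarrow> v \<in> M la n \<longrightarrow>
        act la nu (cmp la mu nu g f) v = act mu nu g (act la mu f v))"

definition gmod_hom ::
  "('k::field \<Rightarrow> 'm::ab_group_add \<Rightarrow> 'm) \<Rightarrow> ('o \<Rightarrow> 'o \<Rightarrow> int \<Rightarrow> 'm set)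
   \<Rightarrow> ('k \<Rightarrow> 'v::ab_group_add \<Rightarrow> 'v) \<Rightarrow> ('o \<Rightarrow> int \<Rightarrow> 'v set) \<Rightarrow> ('o \<Rightarrow> 'o \<Rightarrow> 'm \<Rightarrow> 'v \<Rightarrow> 'v)
   \<Rightarrow> ('k \<Rightarrow> 'w::ab_group_add \<Rightarrow> 'w) \<Rightarrow> ('o \<Rightarrow> int \<Rightarrow> 'w set) \<Rightarrow> ('o \<Rightarrow> 'o \<Rightarrow> 'm \<Rightarrow> 'w \<Rightarrow> 'w)
   \<Rightarrow> ('o \<Rightarrow> 'v \<Rightarrow> 'w) \<Rightarrow> bool" where
  "gmod_hom sC Cm sV M actM sW N actN \<phi> \<longleftrightarrow>
     (\<forall>la n. lin_on sV sW (M la n) (N la n) (\<phi> la)) \<and>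
     (\<forall>la mu i n f v. f \<in> Cm la mu i \<longrightarrow> v \<in> M la n \<longrightarrow> \<phi> mu (actM la mu f v) = actN la mu f (\<phi> la v))"

definition gmod_iso where
  "gmod_iso sC Cm sV M actM sW N actN \<phi> \<longleftrightarrow>
     gmod_hom sC Cm sV M actM sW N actN \<phi> \<and> (\<forall>la n. bij_betw (\<phi> la) (M la n) (N la n))"

definition gsubmodule ::
  "('o \<Rightarrow> 'o \<Rightarrow> int \<Rightarrow> 'm set) \<Rightarrow> ('k::field \<Rightarrow> 'v::ab_group_add \<Rightarrow> 'v) \<Rightarrow> ('o \<Rightarrow> int \<Rightarrow> 'v set)
   \<Rightarrow> ('o \<Rightarrow> 'o \<Rightarrow> 'm \<Rightarrow> 'v \<Rightarrow> 'v) \<Rightarrow> ('o \<Rightarrow> int \<Rightarrow> 'v set) \<Rightarrow> bool" where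
  "gsubmodule Cm sV M act S \<longleftrightarrow>
     (\<forall>la n. module.subspace sV (S la n) \<and> S la n \<subseteq> M la n) \<and>
     (\<forall>la mu i n f v. f \<in> Cm la mu i \<longrightarrow> v \<in> S la n \<longrightarrow> act la mu f v \<in> S mu (n + i))"

text \<open>The shifted representable module P(la)\<langle>k\<rangle>: P(la)\<langle>k\<rangle>(mu)_n = C_{k+n}(la,mu),
  with action by postcomposition.\<close>
definition Pshift :: "('o \<Rightarrow> 'o \<Rightarrow> int \<Rightarrow> 'm set) \<Rightarrow> 'o \<Rightarrow> int \<Rightarrow> 'o \<Rightarrow> int \<Rightarrow> 'm set" where
  "Pshift Cm la k mu n = Cm la mu (k + n)"

definition Pact :: "('o \<Rightarrow> 'o \<Rightarrow> 'o \<Rightarrow> 'm \<Rightarrow> 'm \<Rightarrow> 'm) \<Rightarrow> 'o \<Rightarrow> 'o \<Rightarrow> 'o \<Rightarrow> 'm \<Rightarrow> 'm \<Rightarrow> 'm" where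
  "Pact cmp la mu nu g x = cmp la mu nu g x"

definition internal_dsum ::
  "('k::field \<Rightarrow> 'v::ab_group_add \<Rightarrow> 'v) \<Rightarrow> 'v set \<Rightarrow> ('b \<Rightarrow> 'v set) \<Rightarrow> 'b set \<Rightarrow> bool" where
  "internal_dsum s V F I \<longleftrightarrow>
     (\<forall>b\<in>I. module.subspace s (F b) \<and> F b \<subseteq> V) \<and>
     V = module.span s (\<Union>b\<in>I. F b) \<and>
     (\<forall>J u. finite J \<longrightarrow> J \<subseteq> I \<longrightarrow> (\<forall>b\<in>J. u b \<in> F b) \<longrightarrow> (\<Sum>b\<in>J. u b) = 0 \<longrightarrow> (\<forall>b\<in>J. u b = 0))"

definition gcomplex where
  "gcomplex sC Cm cmp e sV X actX d \<longleftrightarrow>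
     (\<forall>j. graded_module sC Cm cmp e sV (X j) (actX j)) \<and>
     (\<forall>j. gmod_hom sC Cm sV (X j) (actX j) sV (X (j + 1)) (actX (j + 1)) (d j)) \<and>
     (\<forall>j la n v. v \<in> X j la n \<longrightarrow> d (j + 1) la (d j la v) = 0)"

text \<open>Minimal complex: no (nonzero) direct summand (as complexes) of the form
  \<dots> \<rightarrow> 0 \<rightarrow> M \<rightarrow> M \<rightarrow> 0 \<rightarrow> \<dots> with the middle map an isomorphism.\<close>
definition minimal_complex where
  "minimal_complex Cm sV X actX d \<longleftrightarrow>
     \<not> (\<exists>Y Z j0.
          (\<forall>j. gsubmodule Cm sV (X j) (actX j) (Y j) \<and> gsubmodule Cm sV (X j) (actX j) (Z j)) \<and>
          (\<forall>j mu n. Y j mu n \<inter> Z j mu n = {0} \<and>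
                    X j mu n = {y + z | y z. y \<in> Y j mu n \<and> z \<in> Z j mu n}) \<and>
          (\<forall>j mu n v. (v \<in> Y j mu n \<longrightarrow> d j mu v \<in> Y (j + 1) mu n) \<and>
                      (v \<in> Z j mu n \<longrightarrow> d j mu v \<in> Z (j + 1) mu n)) \<and>
          (\<forall>j mu n. j \<noteq> j0 \<and> j \<noteq> j0 + 1 \<longrightarrow> Y j mu n = {0}) \<and>
          (\<forall>mu n. bij_betw (d j0 mu) (Y j0 mu n) (Y (j0 + 1) mu n)) \<and>
          (\<exists>mu n. Y j0 mu n \<noteq> {0}))"

text \<open>X{>i}^j: the sum of the chosen summands S j b \<cong> P(lab j b)\<langle>sh j b\<rangle> with sh j b > i.\<close>
definition part_gt ::
  "('k::field \<Rightarrow> 'v::ab_group_add \<Rightarrow> 'v) \<Rightarrow> (int \<Rightarrow> 'b set) \<Rightarrow> (int \<Rightarrow> 'b \<Rightarrow> 'o \<Rightarrow> int \<Rightarrow> 'v set)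
   \<Rightarrow> (int \<Rightarrow> 'b \<Rightarrow> int) \<Rightarrow> int \<Rightarrow> int \<Rightarrow> 'o \<Rightarrow> int \<Rightarrow> 'v set" where
  "part_gt sV B S sh j i mu n = module.span sV (\<Union>b\<in>{b \<in> B j. sh j b > i}. S j b mu n)"

end

theory Submission
  imports Defs
begin


lemma lin_on_in: "lin_on s1 s2 A B f \<Longrightarrow> x \<in> A \<Longrightarrow> f x \<in> B"
  by (simp add: lin_on_def)
lemma lin_on_add: "lin_on s1 s2 A B f \<Longrightarrow> x \<in> A \<Longrightarrow> y \<in> A \<Longrightarrow> f (x + y) = f x + f y"
  by (simp add: lin_on_def)
lemma lin_on_scale: "lin_on s1 s2 A B f \<Longrightarrow> x \<in> A \<Longrightarrow> f (s1 c x) = s2 c (f x)"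
  by (simp add: lin_on_def)
lemma lin_on_zero: "lin_on s1 s2 A B f \<Longrightarrow> 0 \<in> A \<Longrightarrow> f 0 = 0"
  using lin_on_add[of s1 s2 A B f 0 0] by simp
lemma lin_on_diff: "lin_on s1 s2 A B f \<Longrightarrow> module.subspace s1 A \<Longrightarrow> module s1 \<Longrightarrow> x \<in> A \<Longrightarrow> y \<in> A
   \<Longrightarrow> f (x - y) = f x - f y"
proof -
  assume l: "lin_on s1 s2 A B f" and s: "module.subspace s1 A" and m: "module s1" and x: "x \<in> A" and y: "y \<in> A"
  have xy: "x - y \<in> A" using module.subspace_diff[OF m s x y] .
  have "f x = f ((x - y) + y)" by simp
  also have "\<dots> = f (x - y) + f y" using lin_on_add[OF l xy y] .
  finally show ?thesis by (simp add: algebra_simps)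
qed
lemma lin_on_sum: "lin_on s1 s2 A B f \<Longrightarrow> module.subspace s1 A \<Longrightarrow> module s1 \<Longrightarrow>
   (\<And>b. b \<in> J \<Longrightarrow> u b \<in> A) \<Longrightarrow> f (sum u J) = (\<Sum>b\<in>J. f (u b))"
proof (induction J rule: infinite_finite_induct)
  case (infinite A) then show ?case using lin_on_zero module.subspace_0 by fastforce
next
  case empty then show ?case using lin_on_zero module.subspace_0 by fastforce
next
  case (insert x F)
  have "sum u F \<in> A" by (rule module.subspace_sum[OF insert.prems(3,2)]) (use insert.prems(4) in auto)
  then show ?case using insert lin_on_add[OF insert.prems(1)] by simp
qed

definition decomp :: "('b \<Rightarrow> 'v::ab_group_add set) \<Rightarrow> 'b set \<Rightarrow> 'v \<Rightarrow> ('b \<Rightarrow> 'v) \<Rightarrow> bool" where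
  "decomp F I v u \<longleftrightarrow> (\<forall>b. b \<notin> I \<longrightarrow> u b = 0) \<and> (\<forall>b\<in>I. u b \<in> F b) \<and> finite {b. u b \<noteq> 0}
     \<and> v = sum u {b. u b \<noteq> 0}"

definition comp :: "('b \<Rightarrow> 'v::ab_group_add set) \<Rightarrow> 'b set \<Rightarrow> 'v \<Rightarrow> 'b \<Rightarrow> 'v" where
  "comp F I v = (THE u. decomp F I v u)"

lemma decomp_sum: "decomp F I v u \<Longrightarrow> finite J \<Longrightarrow> {b. u b \<noteq> 0} \<subseteq> J \<Longrightarrow> v = sum u J"
proof -
  assume d: "decomp F I v u" and f: "finite J" and sub: "{b. u b \<noteq> 0} \<subseteq> J"
  have "sum u J = sum u {b. u b \<noteq> 0}" by (rule sum.mono_neutral_right[OF f sub]) blast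
  then show ?thesis using d unfolding decomp_def by simp
qed

lemma decompI: "(\<And>b. b \<notin> I \<Longrightarrow> u b = 0) \<Longrightarrow> (\<And>b. b\<in>I \<Longrightarrow> u b \<in> F b) \<Longrightarrow> finite J \<Longrightarrow>
   {b. u b \<noteq> 0} \<subseteq> J \<Longrightarrow> v = sum u J \<Longrightarrow> decomp F I v u"
proof -
  assume a: "\<And>b. b \<notin> I \<Longrightarrow> u b = 0" "\<And>b. b\<in>I \<Longrightarrow> u b \<in> F b" and f: "finite J"
    and sub: "{b. u b \<noteq> 0} \<subseteq> J" and v: "v = sum u J"
  have "sum u J = sum u {b. u b \<noteq> 0}" by (rule sum.mono_neutral_right[OF f sub]) blast
  moreover have "finite {b. u b \<noteq> 0}" using finite_subset[OF sub f] .
  ultimately show ?thesis using a v unfolding decomp_def by simp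
qed

context vector_space begin

lemma decomp_unique:
  assumes ds: "internal_dsum scale V F I" and u1: "decomp F I v u1" and u2: "decomp F I v u2"
  shows "u1 = u2"
proof -
  let ?J = "{b. u1 b \<noteq> 0} \<union> {b. u2 b \<noteq> 0}"
  have fin: "finite ?J" using u1 u2 by (auto simp: decomp_def)
  have JI: "?J \<subseteq> I" using u1 u2 by (auto simp: decomp_def)
  have s1: "v = sum u1 ?J" by (rule decomp_sum[OF u1 fin]) auto
  have s2: "v = sum u2 ?J" by (rule decomp_sum[OF u2 fin]) auto
  have sub: "\<And>b. b \<in> I \<Longrightarrow> subspace (F b)" using ds by (simp add: internal_dsum_def)
  have inF: "\<forall>b\<in>?J. u1 b - u2 b \<in> F b"
  proof
    fix b assume "b \<in> ?J"
    then have "b \<in> I" using JI by blast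
    moreover have "u1 b \<in> F b" "u2 b \<in> F b" using u1 u2 \<open>b \<in> I\<close> unfolding decomp_def by blast+
    ultimately show "u1 b - u2 b \<in> F b" using sub subspace_diff by blast
  qed
  have sum0: "(\<Sum>b\<in>?J. u1 b - u2 b) = 0" using s1 s2 by (simp add: sum_subtractf)
  have indep: "\<forall>J u. finite J \<longrightarrow> J \<subseteq> I \<longrightarrow> (\<forall>b\<in>J. u b \<in> F b) \<longrightarrow> (\<Sum>b\<in>J. u b) = 0 \<longrightarrow> (\<forall>b\<in>J. u b = 0)"
    using ds unfolding internal_dsum_def by blast
  have eq0: "\<And>b. b \<in> ?J \<Longrightarrow> u1 b - u2 b = 0"
    by (rule indep[rule_format, of ?J "\<lambda>b. u1 b - u2 b", OF fin JI inF[rule_format] sum0])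
  then have eq: "\<And>b. b \<in> ?J \<Longrightarrow> u1 b = u2 b" using eq_iff_diff_eq_0 by blast
  show ?thesis
  proof (rule ext)
    fix b show "u1 b = u2 b"
    proof (cases "b \<in> ?J")
      case True then show ?thesis using eq by blast
    next
      case False then have "u1 b = 0" "u2 b = 0" by blast+
      then show ?thesis by (rule trans[OF _ sym])
    qed
  qed
qed

lemma decomp_exists:
  assumes ds: "internal_dsum scale V F I" and v: "v \<in> V"
  shows "\<exists>u. decomp F I v u"
proof -
  have sub: "\<And>b. b \<in> I \<Longrightarrow> subspace (F b)" using ds by (simp add: internal_dsum_def)
  have "v \<in> span (\<Union>b\<in>I. F b)" using ds v by (simp add: internal_dsum_def)
  then show ?thesis
  proof (induction rule: span_induct_alt)
    case base
    show ?case by (rule exI[of _ "\<lambda>_. 0"], rule decompI[where J="{}"]) (auto intro: subspace_0 sub)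
  next
    case (step c x y)
    then obtain b0 where b0: "b0 \<in> I" "x \<in> F b0" by auto
    obtain u where u: "decomp F I y u" using step by auto
    define J where "J = insert b0 {b. u b \<noteq> 0}"
    have finJ: "finite J" using u by (simp add: J_def decomp_def)
    let ?w = "\<lambda>b. (if b = b0 then c *s x else 0) + u b"
    have "decomp F I (c *s x + y) ?w"
    proof (rule decompI[where J=J])
      show "b \<notin> I \<Longrightarrow> ?w b = 0" for b using u b0 by (auto simp: decomp_def)
      show "b \<in> I \<Longrightarrow> ?w b \<in> F b" for b using u b0 sub
        by (auto simp: decomp_def intro!: subspace_add subspace_scale subspace_0)
      show "finite J" by (rule finJ)
      show "{b. ?w b \<noteq> 0} \<subseteq> J" by (auto simp: J_def)
      have "y = sum u J" by (rule decomp_sum[OF u finJ]) (auto simp: J_def)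
      moreover have "(\<Sum>b\<in>J. (if b = b0 then c *s x else 0)) = c *s x"
        using finJ by (simp add: J_def)
      ultimately show "c *s x + y = sum ?w J" by (simp add: sum.distrib)
    qed
    then show ?case by blast
  qed
qed

lemma comp_decomp: "internal_dsum scale V F I \<Longrightarrow> v \<in> V \<Longrightarrow> decomp F I v (comp F I v)"
proof -
  assume ds: "internal_dsum scale V F I" and v: "v \<in> V"
  obtain u where u: "decomp F I v u" using decomp_exists[OF ds v] by blast
  show ?thesis unfolding comp_def
    by (rule theI[of "decomp F I v" u]) (use u decomp_unique[OF ds] in blast)+
qed

lemma comp_eq: "internal_dsum scale V F I \<Longrightarrow> v \<in> V \<Longrightarrow> decomp F I v u \<Longrightarrow> comp F I v = u"
  using comp_decomp decomp_unique by blast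

lemma comp_in: "internal_dsum scale V F I \<Longrightarrow> v \<in> V \<Longrightarrow> b \<in> I \<Longrightarrow> comp F I v b \<in> F b"
  using comp_decomp unfolding decomp_def by blast

lemma comp_add:
  assumes ds: "internal_dsum scale V F I" and v: "v \<in> V" and w: "w \<in> V"
  shows "comp F I (v + w) b = comp F I v b + comp F I w b"
proof -
  have sub: "\<And>b. b \<in> I \<Longrightarrow> subspace (F b)" using ds by (simp add: internal_dsum_def)
  have sV: "subspace V" using ds by (simp add: internal_dsum_def)
  let ?u = "comp F I v" and ?u' = "comp F I w"
  have du: "decomp F I v ?u" and dw: "decomp F I w ?u'" using comp_decomp ds v w by auto
  define J where "J = {b. ?u b \<noteq> 0} \<union> {b. ?u' b \<noteq> 0}"
  have finJ: "finite J" using du dw by (simp add: J_def decomp_def)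
  have "decomp F I (v + w) (\<lambda>b. ?u b + ?u' b)"
  proof (rule decompI[where J=J])
    show "b \<notin> I \<Longrightarrow> ?u b + ?u' b = 0" for b using du dw by (auto simp: decomp_def)
    show "b \<in> I \<Longrightarrow> ?u b + ?u' b \<in> F b" for b using du dw sub
      by (auto simp: decomp_def intro!: subspace_add)
    show "finite J" by (rule finJ)
    show "{b. ?u b + ?u' b \<noteq> 0} \<subseteq> J" by (auto simp: J_def)
    have "v = sum ?u J" by (rule decomp_sum[OF du finJ]) (auto simp: J_def)
    moreover have "w = sum ?u' J" by (rule decomp_sum[OF dw finJ]) (auto simp: J_def)
    ultimately show "v + w = (\<Sum>b\<in>J. ?u b + ?u' b)" by (simp add: sum.distrib)
  qed
  moreover have "v + w \<in> V" using ds v w by (auto simp: internal_dsum_def intro: subspace_add)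
  ultimately show ?thesis using comp_eq[OF ds] by metis
qed

lemma comp_scale:
  assumes ds: "internal_dsum scale V F I" and v: "v \<in> V"
  shows "comp F I (c *s v) b = c *s comp F I v b"
proof -
  have sub: "\<And>b. b \<in> I \<Longrightarrow> subspace (F b)" using ds by (simp add: internal_dsum_def)
  let ?u = "comp F I v"
  have du: "decomp F I v ?u" using comp_decomp ds v by auto
  define J where "J = {b. ?u b \<noteq> 0}"
  have finJ: "finite J" using du by (simp add: J_def decomp_def)
  have "decomp F I (c *s v) (\<lambda>b. c *s ?u b)"
  proof (rule decompI[where J=J])
    show "b \<notin> I \<Longrightarrow> c *s ?u b = 0" for b using du by (auto simp: decomp_def)
    show "b \<in> I \<Longrightarrow> c *s ?u b \<in> F b" for b using du sub
      by (auto simp: decomp_def intro!: subspace_scale)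
    show "finite J" by (rule finJ)
    show "{b. c *s ?u b \<noteq> 0} \<subseteq> J" by (auto simp: J_def)
    have "v = sum ?u J" by (rule decomp_sum[OF du finJ]) (auto simp: J_def)
    then have "c *s v = c *s sum ?u J" by (rule arg_cong)
    also have "\<dots> = (\<Sum>b\<in>J. c *s ?u b)" by (rule scale_sum_right)
    finally show "c *s v = (\<Sum>b\<in>J. c *s ?u b)" .
  qed
  moreover have "c *s v \<in> V" using ds v by (auto simp: internal_dsum_def intro: subspace_scale)
  ultimately show ?thesis using comp_eq[OF ds] by metis
qed

lemma comp_self:
  assumes ds: "internal_dsum scale V F I" and b0: "b0 \<in> I" and x: "x \<in> F b0"
  shows "comp F I x b0 = x"
proof -
  have sub: "\<And>b. b \<in> I \<Longrightarrow> subspace (F b)" using ds by (simp add: internal_dsum_def)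
  have "decomp F I x (\<lambda>b. if b = b0 then x else 0)"
    by (rule decompI[where J="{b0}"]) (use b0 x sub in \<open>auto intro: subspace_0\<close>)
  moreover have "x \<in> V" using ds b0 x by (auto simp: internal_dsum_def)
  ultimately show ?thesis using comp_eq[OF ds] by fastforce
qed

end



lemma lin_on_comp: "lin_on s1 s2 A B f \<Longrightarrow> lin_on s2 s3 B C g \<Longrightarrow> lin_on s1 s3 A C (\<lambda>x. g (f x))"
  unfolding lin_on_def by auto

locale L3 =
  fixes sC :: "'k::field \<Rightarrow> 'm::ab_group_add \<Rightarrow> 'm"
    and Cm :: "'o \<Rightarrow> 'o \<Rightarrow> int \<Rightarrow> 'm set"
    and cmp :: "'o \<Rightarrow> 'o \<Rightarrow> 'o \<Rightarrow> 'm \<Rightarrow> 'm \<Rightarrow> 'm"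
    and e :: "'o \<Rightarrow> 'm"
    and sV :: "'k \<Rightarrow> 'v::ab_group_add \<Rightarrow> 'v"
    and X :: "int \<Rightarrow> 'o \<Rightarrow> int \<Rightarrow> 'v set"
    and actX :: "int \<Rightarrow> 'o \<Rightarrow> 'o \<Rightarrow> 'm \<Rightarrow> 'v \<Rightarrow> 'v"
    and d :: "int \<Rightarrow> 'o \<Rightarrow> 'v \<Rightarrow> 'v"
    and B :: "int \<Rightarrow> 'b set"
    and S :: "int \<Rightarrow> 'b \<Rightarrow> 'o \<Rightarrow> int \<Rightarrow> 'v set"
    and lab :: "int \<Rightarrow> 'b \<Rightarrow> 'o"
    and sh :: "int \<Rightarrow> 'b \<Rightarrow> int"
  assumes cat: "pos_graded_cat sC Cm cmp e"
    and vsV: "vector_space sV"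
    and cx: "gcomplex sC Cm cmp e sV X actX d"
    and summands: "\<forall>j. \<forall>b\<in>B j. gsubmodule Cm sV (X j) (actX j) (S j b) \<and>
        (\<exists>\<phi>. gmod_iso sC Cm sV (S j b) (actX j) sC (Pshift Cm (lab j b) (sh j b))
                       (Pact cmp (lab j b)) \<phi>)"
    and dsum: "\<forall>j mu n. internal_dsum sV (X j mu n) (\<lambda>b. S j b mu n) (B j)"

sublocale L3 \<subseteq> V: vector_space sV by (rule vsV)

context L3 begin

lemma vsC: "vector_space sC" using cat unfolding pos_graded_cat_def by metis
lemma mV: "module sV" using vsV by (simp add: vector_space_def module_def)
lemma mC: "module sC" using vsC by (simp add: vector_space_def module_def)

lemma Cm_sub: "module.subspace sC (Cm la mu i)" using cat unfolding pos_graded_cat_def by metis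
lemma cmp_lin_inner: "g \<in> Cm mu nu i' \<Longrightarrow> lin_on sC sC (Cm la mu i) (Cm la nu (i + i')) (\<lambda>f. cmp la mu nu g f)"
  using cat unfolding pos_graded_cat_def by metis
lemma e_in: "e la \<in> Cm la la 0" using cat unfolding pos_graded_cat_def by metis
lemma e_right: "f \<in> Cm la mu i \<Longrightarrow> cmp la la mu f (e la) = f" using cat unfolding pos_graded_cat_def by metis
lemma Cm_neg: "i < 0 \<Longrightarrow> Cm la mu i = {0}" using cat unfolding pos_graded_cat_def by metis
lemma Cm_off: "la \<noteq> mu \<Longrightarrow> Cm la mu 0 = {0}" using cat unfolding pos_graded_cat_def by metis
lemma Cm_00: "Cm la la 0 = range (\<lambda>c. sC c (e la))" using cat unfolding pos_graded_cat_def by metis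

lemma Xsub: "V.subspace (X j la n)"
  using cx by (simp add: gcomplex_def graded_module_def)
lemma act_lin: "f \<in> Cm la mu i \<Longrightarrow> lin_on sV sV (X j la n) (X j mu (n + i)) (actX j la mu f)"
  using cx by (simp add: gcomplex_def graded_module_def)
lemma d_lin: "lin_on sV sV (X j la n) (X (j + 1) la n) (d j la)"
  using cx by (simp add: gcomplex_def gmod_hom_def)
lemma d_act: "f \<in> Cm la mu i \<Longrightarrow> v \<in> X j la n \<Longrightarrow> d j mu (actX j la mu f v) = actX (j + 1) la mu f (d j la v)"
  using cx by (simp add: gcomplex_def gmod_hom_def)
lemma dd: "v \<in> X j la n \<Longrightarrow> d (j + 1) la (d j la v) = 0"
  using cx by (simp add: gcomplex_def)
lemma X0: "0 \<in> X j la n" using Xsub V.subspace_0 by blast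
lemma d0: "d j la 0 = 0" using lin_on_zero[OF d_lin X0] .
lemma act0: "f \<in> Cm la mu i \<Longrightarrow> actX j la mu f 0 = 0" using lin_on_zero[OF act_lin X0] .

lemma S_sub: "b \<in> B j \<Longrightarrow> V.subspace (S j b mu n)"
  using summands by (simp add: gsubmodule_def)
lemma S_X: "b \<in> B j \<Longrightarrow> S j b mu n \<subseteq> X j mu n"
  using summands by (simp add: gsubmodule_def)
lemma S_act: "b \<in> B j \<Longrightarrow> f \<in> Cm la mu i \<Longrightarrow> v \<in> S j b la n \<Longrightarrow> actX j la mu f v \<in> S j b mu (n + i)"
  using summands by (simp add: gsubmodule_def)
lemma S0: "b \<in> B j \<Longrightarrow> 0 \<in> S j b mu n" using S_sub V.subspace_0 by blast
lemma ds: "internal_dsum sV (X j mu n) (\<lambda>b. S j b mu n) (B j)" using dsum by blast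

abbreviation isoP where
  "isoP j b \<phi> \<equiv> gmod_iso sC Cm sV (S j b) (actX j) sC (Pshift Cm (lab j b) (sh j b)) (Pact cmp (lab j b)) \<phi>"

lemma iso_ex: "b \<in> B j \<Longrightarrow> \<exists>\<phi>. isoP j b \<phi>" using summands by blast
lemma iso_lin: "isoP j b \<phi> \<Longrightarrow> lin_on sV sC (S j b mu n) (Cm (lab j b) mu (sh j b + n)) (\<phi> mu)"
  by (simp add: gmod_iso_def gmod_hom_def Pshift_def)
lemma iso_bij: "isoP j b \<phi> \<Longrightarrow> bij_betw (\<phi> mu) (S j b mu n) (Cm (lab j b) mu (sh j b + n))"
  by (simp add: gmod_iso_def Pshift_def)
lemma iso_act: "isoP j b \<phi> \<Longrightarrow> f \<in> Cm la mu i \<Longrightarrow> v \<in> S j b la n \<Longrightarrow>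
    \<phi> mu (actX j la mu f v) = cmp (lab j b) la mu f (\<phi> la v)"
  by (simp add: gmod_iso_def gmod_hom_def Pact_def)

definition pr where "pr j mu n v = comp (\<lambda>b. S j b mu n) (B j) v"

lemma pr_in: "v \<in> X j mu n \<Longrightarrow> b \<in> B j \<Longrightarrow> pr j mu n v b \<in> S j b mu n"
  unfolding pr_def by (rule V.comp_in[OF ds])
lemma pr_lin: "b \<in> B j \<Longrightarrow> lin_on sV sV (X j mu n) (S j b mu n) (\<lambda>v. pr j mu n v b)"
  unfolding lin_on_def using pr_in V.comp_add[OF ds] V.comp_scale[OF ds] by (auto simp: pr_def)
lemma pr_self: "b \<in> B j \<Longrightarrow> x \<in> S j b mu n \<Longrightarrow> pr j mu n x b = x"
  unfolding pr_def by (rule V.comp_self[OF ds])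
lemma pr0: "b \<in> B j \<Longrightarrow> pr j mu n 0 b = 0"
  using lin_on_zero[OF pr_lin X0] .

lemma pr_act:
  assumes f: "f \<in> Cm la mu i" and v: "v \<in> X j la n"
  shows "pr j mu (n + i) (actX j la mu f v) b = actX j la mu f (pr j la n v b)"
proof -
  let ?u = "pr j la n v"
  have du: "decomp (\<lambda>b. S j b la n) (B j) v ?u"
    unfolding pr_def by (rule V.comp_decomp[OF ds v])
  define J where "J = {b. ?u b \<noteq> 0}"
  have finJ: "finite J" using du by (simp add: J_def decomp_def)
  have uX: "\<And>b. ?u b \<in> X j la n"
  proof -
    fix b show "?u b \<in> X j la n"
    proof (cases "b \<in> B j")
      case True then show ?thesis using pr_in[OF v True] S_X[OF True] by blast
    next
      case False then have "?u b = 0" using du unfolding decomp_def by blast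
      then show ?thesis using X0 by simp
    qed
  qed
  have dec: "decomp (\<lambda>b. S j b mu (n + i)) (B j) (actX j la mu f v) (\<lambda>b. actX j la mu f (?u b))"
  proof (rule decompI[where J=J])
    show "actX j la mu f (?u b) = 0" if "b \<notin> B j" for b
    proof -
      have "?u b = 0" using du that unfolding decomp_def by blast
      then show ?thesis using act0[OF f] by simp
    qed
    show "actX j la mu f (?u b) \<in> S j b mu (n + i)" if "b \<in> B j" for b
      using S_act[OF that f pr_in[OF v that]] .
    show "finite J" by (rule finJ)
    show "{b. actX j la mu f (?u b) \<noteq> 0} \<subseteq> J"
      using act0[OF f] by (auto simp: J_def)
    have "v = sum ?u J" by (rule decomp_sum[OF du finJ]) (simp add: J_def)
    then have "actX j la mu f v = actX j la mu f (sum ?u J)" by (rule arg_cong)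
    also have "\<dots> = (\<Sum>b\<in>J. actX j la mu f (?u b))"
      by (rule lin_on_sum[OF act_lin[OF f] Xsub mV uX])
    finally show "actX j la mu f v = (\<Sum>b\<in>J. actX j la mu f (?u b))" .
  qed
  have mem: "actX j la mu f v \<in> X j mu (n + i)" using lin_on_in[OF act_lin[OF f] v] .
  have "pr j mu (n + i) (actX j la mu f v) = (\<lambda>b. actX j la mu f (?u b))"
    unfolding pr_def by (rule V.comp_eq[OF ds mem dec[unfolded pr_def]])
  then show ?thesis by (rule fun_cong)
qed

end


context L3 begin

lemma gen_ex:
  assumes iso: "isoP j b \<phi>"
  shows "\<exists>x\<in>S j b (lab j b) (- sh j b). \<phi> (lab j b) x = e (lab j b)"
proof -
  have "bij_betw (\<phi> (lab j b)) (S j b (lab j b) (- sh j b)) (Cm (lab j b) (lab j b) (sh j b + - sh j b))"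
    by (rule iso_bij[OF iso])
  then have "\<phi> (lab j b) ` S j b (lab j b) (- sh j b) = Cm (lab j b) (lab j b) 0"
    by (simp add: bij_betw_def)
  then show ?thesis using e_in by (metis imageE)
qed

lemma gen:
  assumes b: "b \<in> B j" and iso: "isoP j b \<phi>" and x: "x \<in> S j b (lab j b) (- sh j b)"
    and phx: "\<phi> (lab j b) x = e (lab j b)" and g: "g \<in> S j b mu n"
  shows "\<exists>f\<in>Cm (lab j b) mu (sh j b + n). g = actX j (lab j b) mu f x"
proof -
  let ?l = "lab j b" and ?k = "sh j b"
  define f where "f = \<phi> mu g"
  have bij: "bij_betw (\<phi> mu) (S j b mu n) (Cm ?l mu (?k + n))" by (rule iso_bij[OF iso])
  have f: "f \<in> Cm ?l mu (?k + n)" using bij g unfolding f_def bij_betw_def by blast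
  have "actX j ?l mu f x \<in> S j b mu (- ?k + (?k + n))" by (rule S_act[OF b f x])
  then have ax: "actX j ?l mu f x \<in> S j b mu n" by simp
  have "\<phi> mu (actX j ?l mu f x) = cmp ?l ?l mu f (\<phi> ?l x)" by (rule iso_act[OF iso f x])
  also have "\<dots> = f" using phx e_right[OF f] by simp
  finally have "\<phi> mu (actX j ?l mu f x) = \<phi> mu g" unfolding f_def .
  then have "actX j ?l mu f x = g" using bij ax g unfolding bij_betw_def inj_on_def by blast
  then show ?thesis using f by blast
qed

lemma iso0: "isoP j b \<phi> \<Longrightarrow> b \<in> B j \<Longrightarrow> \<phi> mu 0 = 0"
  using lin_on_zero[OF iso_lin S0] .

lemma iso_zero_imp: "isoP j b \<phi> \<Longrightarrow> b \<in> B j \<Longrightarrow> y \<in> S j b mu n \<Longrightarrow> \<phi> mu y = 0 \<Longrightarrow> y = 0"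
proof -
  assume iso: "isoP j b \<phi>" and b: "b \<in> B j" and y: "y \<in> S j b mu n" and z: "\<phi> mu y = 0"
  have "inj_on (\<phi> mu) (S j b mu n)" using iso_bij[OF iso] by (simp add: bij_betw_def)
  then show "y = 0" using y S0[OF b] z iso0[OF iso b] unfolding inj_on_def by metis
qed

end


context L3 begin

lemma gsub_zero: "gsubmodule Cm sV (X j) (actX j) (\<lambda>mu n. {0})"
  unfolding gsubmodule_def using X0 act0 by (auto simp: V.subspace_def)

lemma gsub_X: "gsubmodule Cm sV (X j) (actX j) (X j)"
  unfolding gsubmodule_def using Xsub lin_on_in[OF act_lin] by blast

lemma gsub_S: "b \<in> B j \<Longrightarrow> gsubmodule Cm sV (X j) (actX j) (S j b)"
  using summands by blast

lemma gsub_kernel: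
  assumes lin: "\<And>mu n. lin_on sV sV (X j mu n) (W mu n) (h mu n)"
    and ac: "\<And>la mu i n f v. f \<in> Cm la mu i \<Longrightarrow> v \<in> X j la n \<Longrightarrow> h la n v = 0 \<Longrightarrow> h mu (n + i) (actX j la mu f v) = 0"
  shows "gsubmodule Cm sV (X j) (actX j) (\<lambda>mu n. {v \<in> X j mu n. h mu n v = 0})"
  unfolding gsubmodule_def
proof (intro conjI allI impI)
  fix la n
  show "{v \<in> X j la n. h la n v = 0} \<subseteq> X j la n" by blast
  show "V.subspace {v \<in> X j la n. h la n v = 0}"
  proof (rule V.subspaceI)
    show "0 \<in> {v \<in> X j la n. h la n v = 0}" using X0 lin_on_zero[OF lin X0] by blast
    show "x + y \<in> {v \<in> X j la n. h la n v = 0}" if "x \<in> {v \<in> X j la n. h la n v = 0}" "y \<in> {v \<in> X j la n. h la n v = 0}" for x y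
      using that lin_on_add[OF lin] V.subspace_add[OF Xsub] by auto
    show "sV c x \<in> {v \<in> X j la n. h la n v = 0}" if "x \<in> {v \<in> X j la n. h la n v = 0}" for c x
      using that lin_on_scale[OF lin] V.subspace_scale[OF Xsub] by auto
  qed
next
  fix la mu i n f v assume "f \<in> Cm la mu i" "v \<in> {v \<in> X j la n. h la n v = 0}"
  then show "actX j la mu f v \<in> {v \<in> X j mu (n + i). h mu (n + i) v = 0}"
    using ac lin_on_in[OF act_lin] by blast
qed

lemma gsub_image:
  assumes b: "b \<in> B j"
  shows "gsubmodule Cm sV (X (j + 1)) (actX (j + 1)) (\<lambda>mu n. d j mu ` S j b mu n)"
  unfolding gsubmodule_def
proof (intro conjI allI impI)
  fix la n
  show "d j la ` S j b la n \<subseteq> X (j + 1) la n" using S_X[OF b] lin_on_in[OF d_lin] by blast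
  show "V.subspace (d j la ` S j b la n)"
  proof (rule V.subspaceI)
    show "0 \<in> d j la ` S j b la n" using S0[OF b] d0 by (metis image_eqI)
    show "x + y \<in> d j la ` S j b la n" if hx: "x \<in> d j la ` S j b la n" and hy: "y \<in> d j la ` S j b la n" for x y
    proof -
      obtain s t where st: "s \<in> S j b la n" "t \<in> S j b la n" "x = d j la s" "y = d j la t" using hx hy by blast
      have "d j la (s + t) = x + y" using st lin_on_add[OF d_lin] S_X[OF b] by blast
      moreover have "s + t \<in> S j b la n" using st V.subspace_add[OF S_sub[OF b]] by blast
      ultimately show ?thesis by (metis image_eqI)
    qed
    show "sV c x \<in> d j la ` S j b la n" if hx: "x \<in> d j la ` S j b la n" for c x
    proof -
      obtain s where st: "s \<in> S j b la n" "x = d j la s" using hx by blast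
      have "d j la (sV c s) = sV c x" using st lin_on_scale[OF d_lin] S_X[OF b] by blast
      moreover have "sV c s \<in> S j b la n" using st V.subspace_scale[OF S_sub[OF b]] by blast
      ultimately show ?thesis by (metis image_eqI)
    qed
  qed
next
  fix la mu i n f v assume f: "f \<in> Cm la mu i" and v: "v \<in> d j la ` S j b la n"
  then obtain s where s: "s \<in> S j b la n" "v = d j la s" by blast
  have sX: "s \<in> X j la n" using s(1) S_X[OF b] by blast
  have "actX (j + 1) la mu f v = d j mu (actX j la mu f s)" using d_act[OF f sX] s(2) by simp
  moreover have "actX j la mu f s \<in> S j b mu (n + i)" by (rule S_act[OF b f s(1)])
  ultimately show "actX (j + 1) la mu f v \<in> d j mu ` S j b mu (n + i)" by blast
qed

end


context L3 begin

lemma no_bad: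
  assumes mini: "minimal_complex Cm sV X actX d"
    and b: "b \<in> B j" and b': "b' \<in> B (j + 1)"
    and lab: "lab (j + 1) b' = lab j b" and sh: "sh (j + 1) b' = sh j b"
    and iso: "isoP j b \<phi>" and iso': "isoP (j + 1) b' \<psi>"
    and x: "x \<in> S j b (lab j b) (- sh j b)" and phx: "\<phi> (lab j b) x = e (lab j b)"
    and psy: "\<psi> (lab j b) (pr (j + 1) (lab j b) (- sh j b) (d j (lab j b) x) b') = sC c (e (lab j b))"
    and nz: "sC c (e (lab j b)) \<noteq> 0"
  shows False
proof -
  interpret C: vector_space sC by (rule vsC)
  define l where "l = lab j b"
  define k where "k = sh j b"
  have lab': "lab (j + 1) b' = l" and sh': "sh (j + 1) b' = k" using lab sh by (simp_all add: l_def k_def)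
  have x': "x \<in> S j b l (- k)" and phx': "\<phi> l x = e l" using x phx by (simp_all add: l_def k_def)
  define \<alpha> where "\<alpha> mu n v = pr (j + 1) mu n (d j mu v) b'" for mu n v
  have psy': "\<psi> l (\<alpha> l (- k) x) = sC c (e l)" using psy by (simp add: \<alpha>_def l_def k_def)
  have c0: "c \<noteq> 0" using nz by auto
  have e0: "e l \<noteq> 0" using nz by (auto simp: l_def)
  have xX: "x \<in> X j l (- k)" using x' S_X[OF b] by blast
  have \<alpha>_in: "\<And>mu n v. v \<in> X j mu n \<Longrightarrow> \<alpha> mu n v \<in> S (j + 1) b' mu n"
    unfolding \<alpha>_def using pr_in[OF lin_on_in[OF d_lin] b'] by blast
  have \<alpha>_lin: "\<And>mu n. lin_on sV sV (X j mu n) (S (j + 1) b' mu n) (\<alpha> mu n)"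
    unfolding \<alpha>_def by (rule lin_on_comp[OF d_lin pr_lin[OF b']])
  have \<alpha>_act: "\<And>la mu i n f v. f \<in> Cm la mu i \<Longrightarrow> v \<in> X j la n \<Longrightarrow>
      \<alpha> mu (n + i) (actX j la mu f v) = actX (j + 1) la mu f (\<alpha> la n v)"
  proof -
    fix la mu i n f v assume f: "f \<in> Cm la mu i" and v: "v \<in> X j la n"
    have dv: "d j la v \<in> X (j + 1) la n" using lin_on_in[OF d_lin v] .
    show "\<alpha> mu (n + i) (actX j la mu f v) = actX (j + 1) la mu f (\<alpha> la n v)"
      unfolding \<alpha>_def d_act[OF f v] pr_act[OF f dv] ..
  qed
  have \<alpha>0: "\<And>mu n. \<alpha> mu n 0 = 0" unfolding \<alpha>_def using d0 pr0[OF b'] by simp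
  define y where "y = \<alpha> l (- k) x"
  have yS: "y \<in> S (j + 1) b' l (- k)" unfolding y_def by (rule \<alpha>_in[OF xX])
  have key: "\<And>mu n v. v \<in> S j b mu n \<Longrightarrow> \<psi> mu (\<alpha> mu n v) = sC c (\<phi> mu v)"
  proof -
    fix mu n v assume v: "v \<in> S j b mu n"
    obtain f where f: "f \<in> Cm l mu (k + n)" and vf: "v = actX j l mu f x"
      using gen[OF b iso x phx v] by (auto simp: l_def k_def)
    have "\<alpha> mu (- k + (k + n)) (actX j l mu f x) = actX (j + 1) l mu f (\<alpha> l (- k) x)"
      by (rule \<alpha>_act[OF f xX])
    then have a1: "\<alpha> mu n v = actX (j + 1) l mu f y" using vf y_def by simp
    have "\<psi> mu (actX (j + 1) l mu f y) = cmp (lab (j + 1) b') l mu f (\<psi> l y)"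
      by (rule iso_act[OF iso' f yS])
    also have "\<dots> = cmp l l mu f (sC c (e l))" using lab' psy' y_def by simp
    also have "\<dots> = sC c (cmp l l mu f (e l))"
      using lin_on_scale[OF cmp_lin_inner[OF f, of l 0] e_in] by simp
    also have "\<dots> = sC c f" using e_right[OF f] by simp
    finally have p1: "\<psi> mu (\<alpha> mu n v) = sC c f" using a1 by simp
    have "\<phi> mu (actX j l mu f x) = cmp (lab j b) l mu f (\<phi> l x)"
      using iso_act[OF iso f x'] .
    also have "\<dots> = f" using phx' e_right[OF f] by (simp add: l_def)
    finally have "\<phi> mu v = f" using vf by simp
    then show "\<psi> mu (\<alpha> mu n v) = sC c (\<phi> mu v)" using p1 by simp
  qed
  have inj: "\<And>mu n v1 v2. v1 \<in> S j b mu n \<Longrightarrow> v2 \<in> S j b mu n \<Longrightarrow> \<alpha> mu n v1 = \<alpha> mu n v2 \<Longrightarrow> v1 = v2"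
  proof -
    fix mu n v1 v2 assume v1: "v1 \<in> S j b mu n" and v2: "v2 \<in> S j b mu n" and eq: "\<alpha> mu n v1 = \<alpha> mu n v2"
    have "sC c (\<phi> mu v1) = \<psi> mu (\<alpha> mu n v1)" using key[OF v1] by (rule sym)
    also have "\<dots> = \<psi> mu (\<alpha> mu n v2)" using eq by (rule arg_cong)
    also have "\<dots> = sC c (\<phi> mu v2)" using key[OF v2] .
    finally have "sC c (\<phi> mu v1) = sC c (\<phi> mu v2)" .
    then have pe: "\<phi> mu v1 = \<phi> mu v2" using c0 by simp
    have "inj_on (\<phi> mu) (S j b mu n)" using iso_bij[OF iso] by (simp add: bij_betw_def)
    then show "v1 = v2" by (rule inj_onD[OF _ pe v1 v2])
  qed
  have surj: "\<And>mu n w. w \<in> S (j + 1) b' mu n \<Longrightarrow> \<exists>v\<in>S j b mu n. \<alpha> mu n v = w"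
  proof -
    fix mu n w assume w: "w \<in> S (j + 1) b' mu n"
    have bij': "bij_betw (\<psi> mu) (S (j + 1) b' mu n) (Cm l mu (k + n))"
      using iso_bij[OF iso', of mu n] unfolding lab' sh' .
    have bij: "bij_betw (\<phi> mu) (S j b mu n) (Cm l mu (k + n))"
      using iso_bij[OF iso, of mu n] unfolding l_def k_def .
    have pw: "\<psi> mu w \<in> Cm l mu (k + n)" by (rule bij_betw_apply[OF bij' w])
    define f' where "f' = sC (inverse c) (\<psi> mu w)"
    have f': "f' \<in> Cm l mu (k + n)" unfolding f'_def using C.subspace_scale[OF Cm_sub pw] .
    have "f' \<in> \<phi> mu ` S j b mu n" using f' bij by (simp add: bij_betw_def)
    then obtain v where v: "v \<in> S j b mu n" and pv: "\<phi> mu v = f'" by (auto simp del: C.scale_eq_0_iff)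
    have "\<psi> mu (\<alpha> mu n v) = sC c f'" using key[OF v] pv by simp
    also have "\<dots> = \<psi> mu w" using c0 by (simp add: f'_def)
    finally have pe: "\<psi> mu (\<alpha> mu n v) = \<psi> mu w" .
    have av: "\<alpha> mu n v \<in> S (j + 1) b' mu n" by (rule \<alpha>_in[OF subsetD[OF S_X[OF b] v]])
    have "\<alpha> mu n v = w" by (rule inj_onD[OF bij_betw_imp_inj_on[OF bij'] pe av w])
    then show "\<exists>v\<in>S j b mu n. \<alpha> mu n v = w" using v by blast
  qed
  have xnz: "x \<noteq> 0"
  proof
    assume "x = 0"
    then have "\<phi> l x = 0" using iso0[OF iso b] by simp
    then show False using phx' e0 by simp
  qed
  have \<alpha>_diff: "\<And>mu n v w. v \<in> X j mu n \<Longrightarrow> w \<in> X j mu n \<Longrightarrow> \<alpha> mu n (v - w) = \<alpha> mu n v - \<alpha> mu n w"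
    using lin_on_diff[OF \<alpha>_lin Xsub mV] .
  have pr_diff: "\<And>mu n v w. v \<in> X (j + 1) mu n \<Longrightarrow> w \<in> X (j + 1) mu n \<Longrightarrow>
      pr (j + 1) mu n (v - w) b' = pr (j + 1) mu n v b' - pr (j + 1) mu n w b'"
    using lin_on_diff[OF pr_lin[OF b'] Xsub mV] .
  have SX: "\<And>mu n v. v \<in> S j b mu n \<Longrightarrow> v \<in> X j mu n" using S_X[OF b] by blast
  have dX: "\<And>j' mu n v. v \<in> X j' mu n \<Longrightarrow> d j' mu v \<in> X (j' + 1) mu n" using lin_on_in[OF d_lin] .
  define Y where "Y = (\<lambda>j'. if j' = j then S j b else if j' = j + 1 then (\<lambda>mu n. d j mu ` S j b mu n)
     else (\<lambda>mu n. {0}))"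
  define Z where "Z = (\<lambda>j'. if j' = j then (\<lambda>mu n. {w \<in> X j mu n. \<alpha> mu n w = 0})
     else if j' = j + 1 then (\<lambda>mu n. {v \<in> X (j + 1) mu n. pr (j + 1) mu n v b' = 0}) else X j')"
  have Yj: "Y j = S j b" and Yj1: "Y (j + 1) = (\<lambda>mu n. d j mu ` S j b mu n)"
    and Yo: "\<And>j'. j' \<noteq> j \<Longrightarrow> j' \<noteq> j + 1 \<Longrightarrow> Y j' = (\<lambda>mu n. {0})"
    by (simp_all add: Y_def)
  have Zj: "Z j = (\<lambda>mu n. {w \<in> X j mu n. \<alpha> mu n w = 0})"
    and Zj1: "Z (j + 1) = (\<lambda>mu n. {v \<in> X (j + 1) mu n. pr (j + 1) mu n v b' = 0})"
    and Zo: "\<And>j'. j' \<noteq> j \<Longrightarrow> j' \<noteq> j + 1 \<Longrightarrow> Z j' = X j'"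
    by (simp_all add: Z_def)
  have Y0: "\<And>j' mu n. 0 \<in> Y j' mu n"
  proof -
    fix j' mu n
    show "0 \<in> Y j' mu n"
    proof (cases "j' = j")
      case True then show ?thesis using Yj S0[OF b] by simp
    next
      case False note F = this
      show ?thesis
      proof (cases "j' = j + 1")
        case True
        have "d j mu 0 \<in> d j mu ` S j b mu n" using S0[OF b] by (rule imageI)
        then show ?thesis using True Yj1 d0 by simp
      next
        case False then show ?thesis using F Yo by simp
      qed
    qed
  qed
  have P1: "\<forall>j'. gsubmodule Cm sV (X j') (actX j') (Y j') \<and> gsubmodule Cm sV (X j') (actX j') (Z j')"
  proof
    fix j'
    have gZj: "gsubmodule Cm sV (X j) (actX j) (Z j)"
      unfolding Zj
    proof (rule gsub_kernel[OF \<alpha>_lin])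
      fix la mu i n f v assume f: "f \<in> Cm la mu i" and v: "v \<in> X j la n" and z: "\<alpha> la n v = 0"
      show "\<alpha> mu (n + i) (actX j la mu f v) = 0" using \<alpha>_act[OF f v] z act0[OF f] by simp
    qed
    have gZj1: "gsubmodule Cm sV (X (j + 1)) (actX (j + 1)) (Z (j + 1))"
      unfolding Zj1
    proof (rule gsub_kernel[OF pr_lin[OF b']])
      fix la mu i n f v assume f: "f \<in> Cm la mu i" and v: "v \<in> X (j + 1) la n" and z: "pr (j + 1) la n v b' = 0"
      show "pr (j + 1) mu (n + i) (actX (j + 1) la mu f v) b' = 0" using pr_act[OF f v] z act0[OF f] by simp
    qed
    show "gsubmodule Cm sV (X j') (actX j') (Y j') \<and> gsubmodule Cm sV (X j') (actX j') (Z j')"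
    proof (cases "j' = j")
      case True then show ?thesis using Yj gsub_S[OF b] gZj by simp
    next
      case False note F = this
      show ?thesis
      proof (cases "j' = j + 1")
        case True then show ?thesis using Yj1 gsub_image[OF b] gZj1 by simp
      next
        case False then show ?thesis using F Yo Zo gsub_zero gsub_X by simp
      qed
    qed
  qed
  have P2: "\<forall>j' mu n. Y j' mu n \<inter> Z j' mu n = {0} \<and> X j' mu n = {y + z |y z. y \<in> Y j' mu n \<and> z \<in> Z j' mu n}"
  proof (intro allI)
    fix j' mu n
    show "Y j' mu n \<inter> Z j' mu n = {0} \<and> X j' mu n = {y + z |y z. y \<in> Y j' mu n \<and> z \<in> Z j' mu n}"
    proof (cases "j' = j")
      case True
      have i1: "S j b mu n \<inter> {w \<in> X j mu n. \<alpha> mu n w = 0} = {0}"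
      proof (intro equalityI subsetI)
        fix v assume "v \<in> S j b mu n \<inter> {w \<in> X j mu n. \<alpha> mu n w = 0}"
        then have v: "v \<in> S j b mu n" and av: "\<alpha> mu n v = \<alpha> mu n 0" using \<alpha>0 by auto
        have "v = 0" by (rule inj[OF v S0[OF b] av])
        then show "v \<in> {0}" by simp
      next
        fix v :: 'v assume "v \<in> {0}"
        then show "v \<in> S j b mu n \<inter> {w \<in> X j mu n. \<alpha> mu n w = 0}" using S0[OF b] X0 \<alpha>0 by simp
      qed
      have i2: "X j mu n = {y + z |y z. y \<in> S j b mu n \<and> z \<in> {w \<in> X j mu n. \<alpha> mu n w = 0}}"
      proof (intro equalityI subsetI)
        fix w assume w: "w \<in> X j mu n"
        obtain s where s: "s \<in> S j b mu n" and as: "\<alpha> mu n s = \<alpha> mu n w" using surj[OF \<alpha>_in[OF w]] by blast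
        have "w - s \<in> X j mu n" using V.subspace_diff[OF Xsub w SX[OF s]] .
        moreover have "\<alpha> mu n (w - s) = 0" using \<alpha>_diff[OF w SX[OF s]] as by simp
        moreover have "w = s + (w - s)" by simp
        ultimately show "w \<in> {y + z |y z. y \<in> S j b mu n \<and> z \<in> {w \<in> X j mu n. \<alpha> mu n w = 0}}"
          using s by blast
      next
        fix w assume "w \<in> {y + z |y z. y \<in> S j b mu n \<and> z \<in> {w \<in> X j mu n. \<alpha> mu n w = 0}}"
        then obtain y z where "w = y + z" "y \<in> S j b mu n" "z \<in> X j mu n" by blast
        then show "w \<in> X j mu n" using V.subspace_add[OF Xsub SX] by blast
      qed
      show ?thesis using True Yj Zj i1 i2 by simp
    next
      case False note F = this
      show ?thesis
      proof (cases "j' = j + 1")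
        case True
        have i1: "d j mu ` S j b mu n \<inter> {v \<in> X (j + 1) mu n. pr (j + 1) mu n v b' = 0} = {0}"
        proof (intro equalityI subsetI)
          fix v assume "v \<in> d j mu ` S j b mu n \<inter> {v \<in> X (j + 1) mu n. pr (j + 1) mu n v b' = 0}"
          then obtain s where s: "s \<in> S j b mu n" and vs: "v = d j mu s" and p: "pr (j + 1) mu n v b' = 0" by blast
          have "\<alpha> mu n s = \<alpha> mu n 0" using p vs \<alpha>0 by (simp add: \<alpha>_def)
          then have "s = 0" by (rule inj[OF s S0[OF b]])
          then show "v \<in> {0}" using vs d0 by simp
        next
          fix v :: 'v assume "v \<in> {0}"
          moreover have "d j mu 0 \<in> d j mu ` S j b mu n" using S0[OF b] by (rule imageI)
          ultimately show "v \<in> d j mu ` S j b mu n \<inter> {v \<in> X (j + 1) mu n. pr (j + 1) mu n v b' = 0}"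
            using X0 pr0[OF b'] d0 by simp
        qed
        have i2: "X (j + 1) mu n = {y + z |y z. y \<in> d j mu ` S j b mu n \<and> z \<in> {v \<in> X (j + 1) mu n. pr (j + 1) mu n v b' = 0}}"
        proof (intro equalityI subsetI)
          fix v assume v: "v \<in> X (j + 1) mu n"
          obtain s where s: "s \<in> S j b mu n" and as: "\<alpha> mu n s = pr (j + 1) mu n v b'"
            using surj[OF pr_in[OF v b']] by blast
          have ds: "d j mu s \<in> X (j + 1) mu n" using dX[OF SX[OF s]] .
          have "v - d j mu s \<in> X (j + 1) mu n" using V.subspace_diff[OF Xsub v ds] .
          moreover have "pr (j + 1) mu n (v - d j mu s) b' = 0" using pr_diff[OF v ds] as by (simp add: \<alpha>_def)
          moreover have "v = d j mu s + (v - d j mu s)" by simp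
          moreover have "d j mu s \<in> d j mu ` S j b mu n" using s by (rule imageI)
          ultimately show "v \<in> {y + z |y z. y \<in> d j mu ` S j b mu n \<and> z \<in> {v \<in> X (j + 1) mu n. pr (j + 1) mu n v b' = 0}}"
            by blast
        next
          fix w assume "w \<in> {y + z |y z. y \<in> d j mu ` S j b mu n \<and> z \<in> {v \<in> X (j + 1) mu n. pr (j + 1) mu n v b' = 0}}"
          then obtain s z where "w = d j mu s + z" "s \<in> S j b mu n" "z \<in> X (j + 1) mu n" by blast
          then show "w \<in> X (j + 1) mu n" using V.subspace_add[OF Xsub dX[OF SX]] by blast
        qed
        show ?thesis using True Yj1 Zj1 i1 i2 by simp
      next
        case False
        have "X j' mu n = {y + z |y z. y \<in> {0} \<and> z \<in> X j' mu n}" by auto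
        then show ?thesis using F False Yo Zo X0 by simp
      qed
    qed
  qed
  have P3: "\<forall>j' mu n v. (v \<in> Y j' mu n \<longrightarrow> d j' mu v \<in> Y (j' + 1) mu n) \<and>
                      (v \<in> Z j' mu n \<longrightarrow> d j' mu v \<in> Z (j' + 1) mu n)"
  proof (intro allI conjI impI)
    fix j' mu n v assume v: "v \<in> Y j' mu n"
    show "d j' mu v \<in> Y (j' + 1) mu n"
    proof (cases "j' = j")
      case True then show ?thesis using v Yj Yj1 by simp
    next
      case False note F = this
      show ?thesis
      proof (cases "j' = j + 1")
        case True
        then obtain s where s: "s \<in> S j b mu n" and vs: "v = d j mu s" using v Yj1 by auto
        have "d j' mu v = 0" using True vs dd[OF SX[OF s]] by simp
        moreover have "j' + 1 \<noteq> j" "j' + 1 \<noteq> j + 1" using True by simp_all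
        ultimately show ?thesis using Yo by simp
      next
        case False
        then have "v = 0" using F v Yo by simp
        then show ?thesis using d0 Y0 by simp
      qed
    qed
  next
    fix j' mu n v assume v: "v \<in> Z j' mu n"
    show "d j' mu v \<in> Z (j' + 1) mu n"
    proof (cases "j' = j")
      case True
      then have vX: "v \<in> X j mu n" and av: "\<alpha> mu n v = 0" using v Zj by simp_all
      show ?thesis using True Zj1 dX[OF vX] av by (simp add: \<alpha>_def)
    next
      case False note F = this
      show ?thesis
      proof (cases "j' = j + 1")
        case True
        then have vX: "v \<in> X j' mu n" using v Zj1 by simp
        have "j' + 1 \<noteq> j" "j' + 1 \<noteq> j + 1" using True by simp_all
        then show ?thesis using Zo dX[OF vX] by simp
      next
        case False note F2 = this
        then have vX: "v \<in> X j' mu n" using F v Zo by simp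
        show ?thesis
        proof (cases "j' + 1 = j")
          case True
          have "\<alpha> mu n (d j' mu v) = pr (j + 1) mu n (d (j' + 1) mu (d j' mu v)) b'"
            using True by (simp add: \<alpha>_def)
          also have "\<dots> = 0" using dd[OF vX] pr0[OF b'] by simp
          finally have "\<alpha> mu n (d j' mu v) = 0" .
          moreover have "d j' mu v \<in> X j mu n" using dX[OF vX] True by simp
          ultimately show ?thesis using True Zj by simp
        next
          case False
          moreover have "j' + 1 \<noteq> j + 1" using F by simp
          ultimately show ?thesis using Zo dX[OF vX] by simp
        qed
      qed
    qed
  qed
  have P4: "\<forall>j' mu n. j' \<noteq> j \<and> j' \<noteq> j + 1 \<longrightarrow> Y j' mu n = {0}"
  proof (intro allI impI)
    fix j' mu n assume h: "j' \<noteq> j \<and> j' \<noteq> j + 1"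
    have "Y j' = (\<lambda>mu n. {0})" using h Yo by blast
    then show "Y j' mu n = {0}" by simp
  qed
  have P5: "\<forall>mu n. bij_betw (d j mu) (Y j mu n) (Y (j + 1) mu n)"
  proof (intro allI)
    fix mu n
    have "inj_on (d j mu) (S j b mu n)"
    proof (rule inj_onI)
      fix s t assume s: "s \<in> S j b mu n" and t: "t \<in> S j b mu n" and eq: "d j mu s = d j mu t"
      have "\<alpha> mu n s = \<alpha> mu n t" using eq by (simp add: \<alpha>_def)
      then show "s = t" by (rule inj[OF s t])
    qed
    then show "bij_betw (d j mu) (Y j mu n) (Y (j + 1) mu n)" using Yj Yj1 by (simp add: bij_betw_def)
  qed
  have "Y j l (- k) \<noteq> {0}"
  proof
    assume "Y j l (- k) = {0}"
    then have "x \<in> {0}" using x' Yj by simp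
    then show False using xnz by simp
  qed
  then have P6: "\<exists>mu n. Y j mu n \<noteq> {0}" by blast
  show False using mini unfolding minimal_complex_def
    apply -
    apply (erule notE)
    apply (rule exI[of _ Y], rule exI[of _ Z], rule exI[of _ j])
    apply (intro conjI)
    apply (rule P1)
    apply (rule P2)
    apply (rule P3)
    apply (rule P4)
    apply (rule P5)
    apply (rule P6)
    done
qed

end


context L3 begin

lemma vanish:
  assumes mini: "minimal_complex Cm sV X actX d"
    and b: "b \<in> B j" and shb: "sh j b > i" and iso: "isoP j b \<phi>"
    and x: "x \<in> S j b (lab j b) (- sh j b)" and phx: "\<phi> (lab j b) x = e (lab j b)"
    and b': "b' \<in> B (j + 1)" and shb': "sh (j + 1) b' \<le> i + 1"
  shows "pr (j + 1) (lab j b) (- sh j b) (d j (lab j b) x) b' = 0"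
proof -
  define y where "y = pr (j + 1) (lab j b) (- sh j b) (d j (lab j b) x) b'"
  have xX: "x \<in> X j (lab j b) (- sh j b)" using x S_X[OF b] by blast
  have yS: "y \<in> S (j + 1) b' (lab j b) (- sh j b)"
    unfolding y_def by (rule pr_in[OF lin_on_in[OF d_lin xX] b'])
  obtain \<psi> where iso': "isoP (j + 1) b' \<psi>" using iso_ex[OF b'] by blast
  have py: "\<psi> (lab j b) y \<in> Cm (lab (j + 1) b') (lab j b) (sh (j + 1) b' + - sh j b)"
    by (rule bij_betw_apply[OF iso_bij[OF iso'] yS])
  show ?thesis unfolding y_def[symmetric]
  proof (cases "sh (j + 1) b' + - sh j b < 0")
    case True
    then have "\<psi> (lab j b) y = 0" using py Cm_neg by blast
    then show "y = 0" by (rule iso_zero_imp[OF iso' b' yS])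
  next
    case False
    then have s0: "sh (j + 1) b' + - sh j b = 0" using shb shb' by simp
    then have sheq: "sh (j + 1) b' = sh j b" by simp
    show "y = 0"
    proof (cases "lab (j + 1) b' = lab j b")
      case False
      then have "\<psi> (lab j b) y = 0" using py s0 Cm_off by (metis singletonD)
      then show "y = 0" by (rule iso_zero_imp[OF iso' b' yS])
    next
      case True
      then have "\<psi> (lab j b) y \<in> range (\<lambda>c. sC c (e (lab j b)))" using py s0 Cm_00 by metis
      then obtain c where c: "\<psi> (lab j b) y = sC c (e (lab j b))" by blast
      show "y = 0"
      proof (cases "sC c (e (lab j b)) = 0")
        case True
        then have "\<psi> (lab j b) y = 0" using c by simp
        then show "y = 0" by (rule iso_zero_imp[OF iso' b' yS])
      next
        case False
        have "\<psi> (lab j b) (pr (j + 1) (lab j b) (- sh j b) (d j (lab j b) x) b') = sC c (e (lab j b))"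
          using c unfolding y_def .
        from no_bad[OF mini b b' True sheq iso iso' x phx this False] show "y = 0" by blast
      qed
    qed
  qed
qed

lemma gen_img:
  assumes mini: "minimal_complex Cm sV X actX d"
    and b: "b \<in> B j" and shb: "sh j b > i" and g: "g \<in> S j b mu n"
  shows "d j mu g \<in> part_gt sV B S sh (j + 1) (i + 1) mu n"
proof -
  let ?T = "part_gt sV B S sh (j + 1) (i + 1) mu n"
  have Tsub: "V.subspace ?T" unfolding part_gt_def by (rule V.subspace_span)
  obtain \<phi> where iso: "isoP j b \<phi>" using iso_ex[OF b] by blast
  obtain x where x: "x \<in> S j b (lab j b) (- sh j b)" and phx: "\<phi> (lab j b) x = e (lab j b)"
    using gen_ex[OF iso] by blast
  define l where "l = lab j b"
  define k where "k = sh j b"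
  obtain f where f: "f \<in> Cm l mu (k + n)" and gf: "g = actX j l mu f x"
    using gen[OF b iso x phx g] unfolding l_def k_def by blast
  have xX: "x \<in> X j l (- k)" using x S_X[OF b] unfolding l_def k_def by blast
  have dx: "d j l x \<in> X (j + 1) l (- k)" by (rule lin_on_in[OF d_lin xX])
  have dg: "d j mu g = actX (j + 1) l mu f (d j l x)" unfolding gf by (rule d_act[OF f xX])
  let ?u = "pr (j + 1) l (- k) (d j l x)"
  have du: "decomp (\<lambda>b. S (j + 1) b l (- k)) (B (j + 1)) (d j l x) ?u"
    unfolding pr_def by (rule V.comp_decomp[OF ds dx])
  define J where "J = {b. ?u b \<noteq> 0}"
  have finJ: "finite J" using du by (simp add: J_def decomp_def)
  have uX: "\<And>b'. ?u b' \<in> X (j + 1) l (- k)"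
  proof -
    fix b' show "?u b' \<in> X (j + 1) l (- k)"
    proof (cases "b' \<in> B (j + 1)")
      case True then show ?thesis using pr_in[OF dx True] S_X[OF True] by blast
    next
      case False then have "?u b' = 0" using du unfolding decomp_def by blast
      then show ?thesis using X0 by simp
    qed
  qed
  have "d j l x = sum ?u J" by (rule decomp_sum[OF du finJ]) (simp add: J_def)
  then have "d j mu g = actX (j + 1) l mu f (sum ?u J)" using dg by simp
  also have "\<dots> = (\<Sum>b'\<in>J. actX (j + 1) l mu f (?u b'))"
    by (rule lin_on_sum[OF act_lin[OF f] Xsub mV uX])
  finally have dgs: "d j mu g = (\<Sum>b'\<in>J. actX (j + 1) l mu f (?u b'))" .
  have terms: "actX (j + 1) l mu f (?u b') \<in> ?T" for b'
  proof (cases "b' \<in> B (j + 1) \<and> sh (j + 1) b' > i + 1")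
    case True
    have "actX (j + 1) l mu f (?u b') \<in> S (j + 1) b' mu (- k + (k + n))"
      by (rule S_act[OF _ f pr_in[OF dx]]) (use True in blast)+
    then have "actX (j + 1) l mu f (?u b') \<in> S (j + 1) b' mu n" by simp
    then have "actX (j + 1) l mu f (?u b') \<in> (\<Union>b\<in>{b \<in> B (j + 1). sh (j + 1) b > i + 1}. S (j + 1) b mu n)"
      using True by blast
    then show ?thesis unfolding part_gt_def by (rule V.span_base)
  next
    case False
    have "?u b' = 0"
    proof (cases "b' \<in> B (j + 1)")
      case True
      then have "sh (j + 1) b' \<le> i + 1" using False by simp
      from vanish[OF mini b shb iso x phx True this] show ?thesis unfolding l_def k_def .
    next
      case False then show ?thesis using du unfolding decomp_def by blast
    qed
    then show ?thesis using act0[OF f] V.subspace_0[OF Tsub] by simp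
  qed
  show ?thesis unfolding dgs by (rule V.subspace_sum[OF Tsub terms])
qed

lemma main:
  assumes mini: "minimal_complex Cm sV X actX d"
  shows "d j mu ` part_gt sV B S sh j i mu n \<subseteq> part_gt sV B S sh (j + 1) (i + 1) mu n"
proof
  let ?T = "part_gt sV B S sh (j + 1) (i + 1) mu n"
  have Tsub: "V.subspace ?T" unfolding part_gt_def by (rule V.subspace_span)
  fix w assume "w \<in> d j mu ` part_gt sV B S sh j i mu n"
  then obtain v where v: "v \<in> part_gt sV B S sh j i mu n" and w: "w = d j mu v" by blast
  have vs: "v \<in> V.span (\<Union>b\<in>{b \<in> B j. sh j b > i}. S j b mu n)" using v unfolding part_gt_def .
  have "v \<in> X j mu n \<and> d j mu v \<in> ?T"
    using vs
  proof (induction rule: V.span_induct_alt)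
    case base
    show ?case using X0 d0 V.subspace_0[OF Tsub] by simp
  next
    case (step c x y)
    then obtain b where b: "b \<in> B j" "sh j b > i" and xS: "x \<in> S j b mu n" by blast
    have xX: "x \<in> X j mu n" using xS S_X[OF b(1)] by blast
    have cx: "sV c x \<in> X j mu n" by (rule V.subspace_scale[OF Xsub xX])
    have yX: "y \<in> X j mu n" using step by blast
    have "d j mu (sV c x + y) = sV c (d j mu x) + d j mu y"
      using lin_on_add[OF d_lin cx yX] lin_on_scale[OF d_lin xX] by simp
    moreover have "d j mu x \<in> ?T" by (rule gen_img[OF mini b xS])
    ultimately have "d j mu (sV c x + y) \<in> ?T"
      using step V.subspace_add[OF Tsub] V.subspace_scale[OF Tsub] by simp
    moreover have "sV c x + y \<in> X j mu n" by (rule V.subspace_add[OF Xsub cx yX])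
    ultimately show ?case by blast
  qed
  then show "w \<in> ?T" using w by simp
qed

end

theorem lemma3p2:
  fixes sC :: "'k::field \<Rightarrow> 'm::ab_group_add \<Rightarrow> 'm"
    and Cm :: "'o \<Rightarrow> 'o \<Rightarrow> int \<Rightarrow> 'm set"
    and cmp :: "'o \<Rightarrow> 'o \<Rightarrow> 'o \<Rightarrow> 'm \<Rightarrow> 'm \<Rightarrow> 'm"
    and e :: "'o \<Rightarrow> 'm"
    and sV :: "'k \<Rightarrow> 'v::ab_group_add \<Rightarrow> 'v"
    and X :: "int \<Rightarrow> 'o \<Rightarrow> int \<Rightarrow> 'v set"
    and actX :: "int \<Rightarrow> 'o \<Rightarrow> 'o \<Rightarrow> 'm \<Rightarrow> 'v \<Rightarrow> 'v"
    and d :: "int \<Rightarrow> 'o \<Rightarrow> 'v \<Rightarrow> 'v"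
    and B :: "int \<Rightarrow> 'b set"
    and S :: "int \<Rightarrow> 'b \<Rightarrow> 'o \<Rightarrow> int \<Rightarrow> 'v set"
    and lab :: "int \<Rightarrow> 'b \<Rightarrow> 'o"
    and sh :: "int \<Rightarrow> 'b \<Rightarrow> int"
  assumes cat: "pos_graded_cat sC Cm cmp e"
    and vsV: "vector_space sV"
    and cx: "gcomplex sC Cm cmp e sV X actX d"
    and mini: "minimal_complex Cm sV X actX d"
    and summands: "\<forall>j. \<forall>b\<in>B j. gsubmodule Cm sV (X j) (actX j) (S j b) \<and>
        (\<exists>\<phi>. gmod_iso sC Cm sV (S j b) (actX j) sC (Pshift Cm (lab j b) (sh j b))
                       (Pact cmp (lab j b)) \<phi>)"
    and dsum: "\<forall>j mu n. internal_dsum sV (X j mu n) (\<lambda>b. S j b mu n) (B j)"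
  shows "\<forall>i j mu n. d j mu ` part_gt sV B S sh j i mu n \<subseteq> part_gt sV B S sh (j + 1) (i + 1) mu n"
proof -
  interpret L3 sC Cm cmp e sV X actX d B S lab sh
    by (rule L3.intro[OF cat vsV cx summands dsum])
  show ?thesis using main[OF mini] by blast
qed

end
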